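(* The Brier-score data collecting mechanism described in the context is individually rational, truthful, budget feasible, and symmetric.
   Context: A data analyst with budget $B$ buys data from $n$ data providers. Provider $i$ holds a dataset $D_i$ whose points are i.i.d. conditioned on unknown parameters $\boldsymbol{\theta}$; datasets are independent conditioned on $\boldsymbol{\theta}$. Here the analyst knows $p(D_i\mid\boldsymbol{\theta})$ and the prior, so she can compute $p(D_{-i}\mid D_i)$ for every possible $D_{-i}$ (the datasets of all providers other than $i$). The mechanism: (1) all providers report datasets $\tilde D_1,\dots,\tilde D_n$; (2) for all possible $D_{-i}$ compute $p(D_{-i}\mid\tilde D_i)$; (3) the score for provider $i$ is $s_i=1-\frac{1}{|D_{-i}|}\sum_{D_{-i}}\big(p(D_{-i}\mid\tilde D_i)-\mathbb{I}[D_{-i}=\tilde D_{-i}]\big)^2$, where the sum is over all possible $D_{-i}$, $|D_{-i}|$ is the number of possible $D_{-i}$, and $\mathbb{I}[D_{-i}=\tilde D_{-i}]$ is $1$ if $D_{-i}$ equals the reported $\tilde D_{-i}$ and $0$ otherwise; (4) the payment is $r_i=\frac{B\cdot s_i}{n}$. Definitions: truthful means that for any underlying distribution, every $i$ and every $D_i$, when all others report truthfully, $\mathbb{E}_{D_{-i}\sim p(D_{-i}\mid D_i)}[r_i(D_i,D_{-i})]\ge \mathbb{E}_{D_{-i}\sim p(D_{-i}\mid D_i)}[r_i(D_i',D_{-i})]$ for all $D_i'$; individually rational means $r_i\ge0$ always; budget feasible means $\sum_i r_i\le B$ always; symmetric means $r_i(D_1,\dots,D_n)=r_{\pi(i)}(D_{\pi(1)},\dots,D_{\pi(n)})$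 for every permutation $\pi$. *)

theory Defs
  imports "HOL-Probability.Probability"
begin

text \<open>
A dataset is an element of a finite type 'd
(the finitely many possible datasets). The unknown parameters theta range over a
type 't carrying a prior probability measure M. The likelihood of a dataset D
given theta is L theta D; datasets are independent conditioned on theta, so the
joint probability of a profile D (a function from provider indices to datasets) is
the integral over the prior of the product of the likelihoods.
\<close>

definition joint_prob :: "'t measure \<Rightarrow> ('t \<Rightarrow> 'd \<Rightarrow> real) \<Rightarrow> nat \<Rightarrow> (nat \<Rightarrow> 'd) \<Rightarrow> real" where
  "joint_prob M L n D = (\<integral>\<theta>. (\<Prod>j<n. L \<theta> (D j)) \<partial>M)"

definition others :: "nat \<Rightarrow> nat \<Rightarrow> (nat \<Rightarrow> 'd) set" where
  "others n i = PiE ({..<n} - {i}) (\<lambda>_. UNIV)"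

definition marg_prob :: "'t measure \<Rightarrow> ('t \<Rightarrow> 'd \<Rightarrow> real) \<Rightarrow> nat \<Rightarrow> nat \<Rightarrow> 'd \<Rightarrow> real" where
  "marg_prob M L n i d = (\<Sum>Dm\<in>others n i. joint_prob M L n (Dm(i := d)))"

definition cond_prob :: "'t measure \<Rightarrow> ('t \<Rightarrow> 'd \<Rightarrow> real) \<Rightarrow> nat \<Rightarrow> nat \<Rightarrow> 'd \<Rightarrow> (nat \<Rightarrow> 'd) \<Rightarrow> real" where
  "cond_prob M L n i d Dm = joint_prob M L n (Dm(i := d)) / marg_prob M L n i d"

definition brier_score :: "'t measure \<Rightarrow> ('t \<Rightarrow> 'd \<Rightarrow> real) \<Rightarrow> nat \<Rightarrow> nat \<Rightarrow> (nat \<Rightarrow> 'd) \<Rightarrow> real" where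
  "brier_score M L n i D = 1 - (1 / real (card (others n i :: (nat \<Rightarrow> 'd) set))) *
     (\<Sum>Dm\<in>others n i. (cond_prob M L n i (D i) Dm -
        (if Dm = restrict D ({..<n} - {i}) then 1 else 0))\<^sup>2)"

definition payment :: "real \<Rightarrow> 't measure \<Rightarrow> ('t \<Rightarrow> 'd \<Rightarrow> real) \<Rightarrow> nat \<Rightarrow> nat \<Rightarrow> (nat \<Rightarrow> 'd) \<Rightarrow> real" where
  "payment B M L n i D = B * brier_score M L n i D / real n"

end

theory Submission
  imports Defs
begin

lemma mem_others: "Dm \<in> others n i \<longleftrightarrow> (\<forall>x. (x \<ge> n \<or> x = i) \<longrightarrow> Dm x = undefined)"
  unfolding others_def by (auto simp: PiE_iff extensional_def)

lemma finite_others: "finite (others n i :: (nat \<Rightarrow> 'd::finite) set)"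
  unfolding others_def by (rule finite_PiE) auto

lemma joint_nonneg:
  assumes "\<And>\<theta> d. L \<theta> d \<ge> (0::real)"
  shows "joint_prob M L n D \<ge> 0"
  unfolding joint_prob_def by (rule Bochner_Integration.integral_nonneg) (simp add: prod_nonneg assms)

lemma marg_nonneg:
  assumes "\<And>\<theta> d. L \<theta> d \<ge> (0::real)"
  shows "marg_prob M L n i d \<ge> 0"
  unfolding marg_prob_def by (rule sum_nonneg) (simp add: joint_nonneg assms)

lemma cond_bounds:
  fixes L :: "'t \<Rightarrow> 'd::finite \<Rightarrow> real"
  assumes "\<And>\<theta> d. L \<theta> d \<ge> 0" "Dm \<in> others n i"
  shows "0 \<le> cond_prob M L n i d Dm \<and> cond_prob M L n i d Dm \<le> 1"
proof -
  have j: "joint_prob M L n (Dm(i := d)) \<ge> 0" by (simp add: joint_nonneg assms)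
  have le: "joint_prob M L n (Dm(i := d)) \<le> marg_prob M L n i d"
    unfolding marg_prob_def
    by (rule member_le_sum[OF assms(2)]) (auto simp: joint_nonneg assms finite_others)
  show ?thesis using j le unfolding cond_prob_def
    by (auto simp: divide_le_eq_1)
qed

lemma cond_sum:
  fixes L :: "'t \<Rightarrow> 'd::finite \<Rightarrow> real"
  shows "(\<Sum>Dm\<in>others n i. cond_prob M L n i d Dm) = (if marg_prob M L n i d = 0 then 0 else 1)"
  unfolding cond_prob_def by (simp add: sum_divide_distrib[symmetric] marg_prob_def[symmetric])

lemma sq_le1:
  fixes a b :: real
  assumes "0 \<le> a" "a \<le> 1" "b = 0 \<or> b = 1"
  shows "(a - b)^2 \<le> 1"
proof -
  have "\<bar>a - b\<bar> \<le> 1" using assms by auto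
  then show ?thesis by (metis abs_ge_zero power2_abs power_le_one)
qed

lemma score_bounds:
  fixes L :: "'t \<Rightarrow> 'd::finite \<Rightarrow> real"
  assumes "\<And>\<theta> d. L \<theta> d \<ge> 0"
  shows "0 \<le> brier_score M L n i D \<and> brier_score M L n i D \<le> 1"
proof -
  let ?S = "others n i :: (nat \<Rightarrow> 'd) set"
  let ?t = "\<lambda>Dm. (cond_prob M L n i (D i) Dm -
        (if Dm = restrict D ({..<n} - {i}) then 1 else 0))\<^sup>2"
  have t1: "?t Dm \<le> 1" if "Dm \<in> ?S" for Dm
    by (rule sq_le1) (use cond_bounds[where L=L and d="D i" and M=M, OF assms that] in auto)
  have s1: "sum ?t ?S \<le> real (card ?S)"
    using sum_mono[of ?S ?t "\<lambda>_. 1"] t1 by simp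
  have s0: "sum ?t ?S \<ge> 0" by (rule sum_nonneg) simp
  have "(1 / real (card ?S)) * sum ?t ?S \<le> 1"
  proof (cases "card ?S = 0")
    case True then show ?thesis by simp
  next
    case False then show ?thesis using s1 by (simp add: divide_le_eq_1)
  qed
  moreover have "(1 / real (card ?S)) * sum ?t ?S \<ge> 0" using s0 by simp
  ultimately show ?thesis unfolding brier_score_def by linarith
qed

lemma sq_expand:
  fixes p :: "'a \<Rightarrow> real"
  assumes "finite S" "x \<in> S"
  shows "(\<Sum>E\<in>S. (p E - (if E = x then 1 else 0))\<^sup>2) = (\<Sum>E\<in>S. (p E)\<^sup>2) - 2 * p x + 1"
proof -
  have "(\<Sum>E\<in>S. (p E - (if E = x then 1 else 0))\<^sup>2)
      = (\<Sum>E\<in>S. (p E)\<^sup>2 - 2 * (if E = x then p E else 0) + (if E = x then 1 else 0))"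
    by (rule sum.cong) (auto simp: power2_eq_square algebra_simps)
  also have "\<dots> = (\<Sum>E\<in>S. (p E)\<^sup>2) - 2 * (\<Sum>E\<in>S. (if E = x then p E else 0)) + (\<Sum>E\<in>S. (if E = x then 1 else 0))"
    by (simp add: sum.distrib sum_subtractf sum_distrib_left)
  also have "\<dots> = (\<Sum>E\<in>S. (p E)\<^sup>2) - 2 * p x + 1"
    using assms by (simp add: sum.delta)
  finally show ?thesis .
qed

lemma brier_proper:
  fixes q p :: "'a \<Rightarrow> real"
  assumes "finite S" "sum q S = 1"
  shows "(\<Sum>x\<in>S. q x * (\<Sum>E\<in>S. (q E - (if E = x then 1 else 0))\<^sup>2))
       \<le> (\<Sum>x\<in>S. q x * (\<Sum>E\<in>S. (p E - (if E = x then 1 else 0))\<^sup>2))"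
proof -
  have eq: "(\<Sum>x\<in>S. q x * (\<Sum>E\<in>S. (r E - (if E = x then 1 else 0))\<^sup>2))
      = (\<Sum>E\<in>S. (r E)\<^sup>2) - 2 * (\<Sum>x\<in>S. q x * r x) + 1" for r :: "'a \<Rightarrow> real"
  proof -
    have "(\<Sum>x\<in>S. q x * (\<Sum>E\<in>S. (r E - (if E = x then 1 else 0))\<^sup>2))
        = (\<Sum>x\<in>S. q x * (\<Sum>E\<in>S. (r E)\<^sup>2) - 2 * (q x * r x) + q x)"
      by (rule sum.cong) (simp_all add: sq_expand assms algebra_simps)
    also have "\<dots> = (\<Sum>x\<in>S. q x) * (\<Sum>E\<in>S. (r E)\<^sup>2) - 2 * (\<Sum>x\<in>S. q x * r x) + (\<Sum>x\<in>S. q x)"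
      by (simp only: sum.distrib sum_subtractf sum_distrib_left[symmetric] sum_distrib_right[symmetric])
    finally show ?thesis using assms by simp
  qed
  have "0 \<le> (\<Sum>E\<in>S. (p E - q E)\<^sup>2)" by (rule sum_nonneg) simp
  also have "(\<Sum>E\<in>S. (p E - q E)\<^sup>2) = (\<Sum>E\<in>S. (p E)\<^sup>2) - 2 * (\<Sum>x\<in>S. q x * p x) + (\<Sum>E\<in>S. (q E)\<^sup>2)"
  proof -
    have "(\<Sum>E\<in>S. (p E - q E)\<^sup>2) = (\<Sum>E\<in>S. (p E)\<^sup>2 - 2 * (q E * p E) + (q E)\<^sup>2)"
      by (rule sum.cong) (auto simp: power2_eq_square algebra_simps)
    then show ?thesis by (simp add: sum.distrib sum_subtractf sum_distrib_left)
  qed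
  finally have "0 \<le> (\<Sum>E\<in>S. (p E)\<^sup>2) - 2 * (\<Sum>x\<in>S. q x * p x) + (\<Sum>E\<in>S. (q E)\<^sup>2)" .
  moreover have "(\<Sum>x\<in>S. q x * q x) = (\<Sum>E\<in>S. (q E)\<^sup>2)" by (simp add: power2_eq_square)
  ultimately show ?thesis unfolding eq by linarith
qed

lemma restrict_upd:
  assumes "Dm \<in> others n i"
  shows "restrict (Dm(i := d)) ({..<n} - {i}) = Dm"
  using assms by (auto simp: restrict_def mem_others fun_eq_iff)

lemma alg1: "(B::real) * (1 - 1 / K * T) / N = B / N - B / (N * K) * T"
  by (cases "N = 0"; cases "K = 0") (simp_all add: field_simps)

lemma truthful:
  fixes L :: "'t \<Rightarrow> 'd::finite \<Rightarrow> real"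
  assumes B: "B \<ge> 0" and Lnn: "\<And>\<theta> d. L \<theta> d \<ge> 0"
  shows "(\<Sum>Dm\<in>others n i. cond_prob M L n i d Dm * payment B M L n i (Dm(i := d)))
          \<ge> (\<Sum>Dm\<in>others n i. cond_prob M L n i d Dm * payment B M L n i (Dm(i := d')))"
proof -
  let ?S = "others n i :: (nat \<Rightarrow> 'd) set"
  let ?K = "real (card ?S)"
  let ?q = "cond_prob M L n i d"
  define F where "F p = (\<Sum>x\<in>?S. ?q x * (\<Sum>E\<in>?S. (p E - (if E = x then 1 else 0))\<^sup>2))" for p
  define c where "c = B / (real n * ?K)"
  have c0: "c \<ge> 0" unfolding c_def using B by simp
  have pay: "payment B M L n i (Dm(i:=e)) = B / real n - c * (\<Sum>E\<in>?S. (cond_prob M L n i e E - (if E = Dm then 1 else 0))\<^sup>2)"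
    if "Dm \<in> ?S" for Dm e
  proof -
    have r: "restrict (Dm(i := e)) ({..<n} - {i}) = Dm" using that by (rule restrict_upd)
    show ?thesis unfolding payment_def brier_score_def r fun_upd_same c_def alg1 ..
  qed
  have sumeq: "(\<Sum>Dm\<in>?S. ?q Dm * payment B M L n i (Dm(i:=e))) = B / real n * sum ?q ?S - c * F (cond_prob M L n i e)" for e
  proof -
    have "(\<Sum>Dm\<in>?S. ?q Dm * payment B M L n i (Dm(i:=e)))
       = (\<Sum>Dm\<in>?S. B / real n * ?q Dm - c * (?q Dm * (\<Sum>E\<in>?S. (cond_prob M L n i e E - (if E = Dm then 1 else 0))\<^sup>2)))"
      by (rule sum.cong) (simp_all add: pay algebra_simps)
    also have "\<dots> = B / real n * sum ?q ?S - c * F (cond_prob M L n i e)"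
      unfolding F_def by (simp only: sum_subtractf sum_distrib_left[symmetric])
    finally show ?thesis .
  qed
  show ?thesis
  proof (cases "marg_prob M L n i d = 0")
    case True
    then show ?thesis by (simp add: cond_prob_def)
  next
    case False
    then have "sum ?q ?S = 1" by (simp add: cond_sum)
    then have "F ?q \<le> F (cond_prob M L n i d')"
      unfolding F_def by (rule brier_proper[OF finite_others])
    then have "c * F ?q \<le> c * F (cond_prob M L n i d')" using c0 by (rule mult_left_mono)
    then show ?thesis unfolding sumeq by linarith
  qed
qed

lemma joint_cong:
  assumes "\<And>j. j < n \<Longrightarrow> F j = G j"
  shows "joint_prob M L n F = joint_prob M L n G"
proof -
  have "(\<lambda>\<theta>. \<Prod>j<n. L \<theta> (F j)) = (\<lambda>\<theta>. \<Prod>j<n. L \<theta> (G j))"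
    using assms by (auto intro!: prod.cong)
  then show ?thesis unfolding joint_prob_def by simp
qed

lemma joint_perm:
  assumes "\<pi> permutes {..<n}"
  shows "joint_prob M L n (F \<circ> \<pi>) = joint_prob M L n F"
proof -
  have "(\<lambda>\<theta>. \<Prod>j<n. L \<theta> ((F \<circ> \<pi>) j)) = (\<lambda>\<theta>. \<Prod>j<n. L \<theta> (F j))"
  proof
    fix \<theta>
    show "(\<Prod>j<n. L \<theta> ((F \<circ> \<pi>) j)) = (\<Prod>j<n. L \<theta> (F j))"
      using prod.permute[OF assms, of "\<lambda>j. L \<theta> (F j)"] by (simp add: comp_def)
  qed
  then show ?thesis unfolding joint_prob_def by simp
qed

lemma sym_score:
  fixes L :: "'t \<Rightarrow> 'd::finite \<Rightarrow> real"
  assumes perm: "\<pi> permutes {..<n}" and i: "i < n"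
  shows "brier_score M L n i (D \<circ> \<pi>) = brier_score M L n (\<pi> i) D"
proof -
  define \<sigma> where "\<sigma> = inv \<pi>"
  have sperm: "\<sigma> permutes {..<n}" unfolding \<sigma>_def using perm by (rule permutes_inv)
  have ps: "\<pi> (\<sigma> x) = x" "\<sigma> (\<pi> x) = x" for x
    unfolding \<sigma>_def using permutes_inverses[OF perm] by auto
  have pin: "\<pi> x < n \<longleftrightarrow> x < n" for x
    using permutes_in_image[OF perm, of x] by simp
  have sin: "\<sigma> x < n \<longleftrightarrow> x < n" for x
    using permutes_in_image[OF sperm, of x] by simp
  have pinj: "\<pi> x = \<pi> y \<longleftrightarrow> x = y" for x y
    using permutes_inj[OF perm] by (simp add: inj_eq)
  have pin_i: "\<pi> i < n" using i pin by simp
  define \<phi> :: "(nat \<Rightarrow> 'd) \<Rightarrow> (nat \<Rightarrow> 'd)"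
    where "\<phi> Dm = (\<lambda>j. if j < n \<and> j \<noteq> \<pi> i then Dm (\<sigma> j) else undefined)" for Dm
  define \<psi> :: "(nat \<Rightarrow> 'd) \<Rightarrow> (nat \<Rightarrow> 'd)"
    where "\<psi> E = (\<lambda>j. if j < n \<and> j \<noteq> i then E (\<pi> j) else undefined)" for E
  have bij: "bij_betw \<phi> (others n i) (others n (\<pi> i))"
  proof (rule bij_betw_byWitness[where f' = \<psi>])
    show "\<forall>a\<in>others n i. \<psi> (\<phi> a) = a"
      by (auto simp: \<phi>_def \<psi>_def fun_eq_iff mem_others pin pinj ps)
    show "\<forall>a\<in>others n (\<pi> i). \<phi> (\<psi> a) = a"
    proof (intro ballI ext)
      fix a :: "nat \<Rightarrow> 'd" and j assume a: "a \<in> others n (\<pi> i)"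
      show "\<phi> (\<psi> a) j = a j"
      proof (cases "j < n \<and> j \<noteq> \<pi> i")
        case True
        then have "\<sigma> j < n" "\<sigma> j \<noteq> i" using sin ps by (metis, metis)
        then show ?thesis using True by (simp add: \<phi>_def \<psi>_def ps)
      next
        case False
        then show ?thesis using a by (auto simp: \<phi>_def mem_others)
      qed
    qed
    show "\<phi> ` others n i \<subseteq> others n (\<pi> i)"
      by (auto simp: \<phi>_def mem_others)
    show "\<psi> ` others n (\<pi> i) \<subseteq> others n i"
      by (auto simp: \<psi>_def mem_others)
  qed
  have joint_eq: "joint_prob M L n ((\<phi> Dm)(\<pi> i := d)) = joint_prob M L n (Dm(i := d))"
    if "Dm \<in> others n i" for Dm d
  proof -
    have "joint_prob M L n ((\<phi> Dm)(\<pi> i := d)) = joint_prob M L n (((\<phi> Dm)(\<pi> i := d)) \<circ> \<pi>)"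
      by (rule joint_perm[OF perm, symmetric])
    also have "\<dots> = joint_prob M L n (Dm(i := d))"
      by (rule joint_cong) (auto simp: \<phi>_def pin pinj ps)
    finally show ?thesis .
  qed
  have marg_eq: "marg_prob M L n (\<pi> i) d = marg_prob M L n i d" for d
  proof -
    have "marg_prob M L n (\<pi> i) d = (\<Sum>Dm\<in>others n i. joint_prob M L n ((\<phi> Dm)(\<pi> i := d)))"
      unfolding marg_prob_def by (rule sum.reindex_bij_betw[OF bij, symmetric])
    also have "\<dots> = marg_prob M L n i d"
      unfolding marg_prob_def by (rule sum.cong) (simp_all add: joint_eq)
    finally show ?thesis .
  qed
  have cond_eq: "cond_prob M L n (\<pi> i) d (\<phi> Dm) = cond_prob M L n i d Dm"
    if "Dm \<in> others n i" for Dm d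
    using that by (simp add: cond_prob_def joint_eq marg_eq)
  have card: "card (others n i :: (nat \<Rightarrow> 'd) set) = card (others n (\<pi> i) :: (nat \<Rightarrow> 'd) set)"
    by (rule bij_betw_same_card[OF bij])
  define R where "R = restrict (D \<circ> \<pi>) ({..<n} - {i})"
  have R: "R \<in> others n i" by (auto simp: R_def mem_others)
  have \<phi>R: "\<phi> R = restrict D ({..<n} - {\<pi> i})"
  proof (rule ext)
    fix j
    show "\<phi> R j = restrict D ({..<n} - {\<pi> i}) j"
    proof (cases "j < n \<and> j \<noteq> \<pi> i")
      case True
      then have "\<sigma> j < n" "\<sigma> j \<noteq> i" using sin ps by (metis, metis)
      then show ?thesis using True by (simp add: \<phi>_def R_def ps)
    next
      case False
      then show ?thesis by (auto simp: \<phi>_def)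
    qed
  qed
  have ind: "(\<phi> Dm = restrict D ({..<n} - {\<pi> i})) \<longleftrightarrow> (Dm = R)" if "Dm \<in> others n i" for Dm
    using bij_betw_imp_inj_on[OF bij] that R unfolding \<phi>R[symmetric]
    by (auto dest: inj_onD)
  have "brier_score M L n (\<pi> i) D = 1 - (1 / real (card (others n (\<pi> i) :: (nat \<Rightarrow> 'd) set))) *
     (\<Sum>Dm\<in>others n i. (cond_prob M L n (\<pi> i) (D (\<pi> i)) (\<phi> Dm) -
        (if \<phi> Dm = restrict D ({..<n} - {\<pi> i}) then 1 else 0))\<^sup>2)"
    unfolding brier_score_def by (subst sum.reindex_bij_betw[OF bij]) (rule refl)
  also have "\<dots> = brier_score M L n i (D \<circ> \<pi>)"
    unfolding brier_score_def card[symmetric] R_def[symmetric]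
    by (intro arg_cong2[where f = "(-)"] refl arg_cong2[where f = "(*)"] sum.cong)
       (simp_all add: cond_eq ind)
  finally show ?thesis by simp
qed

theorem theorem6:
  fixes B :: real and n :: nat
    and M :: "'t measure" and L :: "'t \<Rightarrow> 'd::finite \<Rightarrow> real"
  assumes B_nonneg: "B \<ge> 0"
    and prior: "prob_space M"
    and L_meas: "\<And>d. (\<lambda>\<theta>. L \<theta> d) \<in> borel_measurable M"
    and L_nonneg: "\<And>\<theta> d. L \<theta> d \<ge> 0"
    and L_sum: "\<And>\<theta>. (\<Sum>d\<in>UNIV. L \<theta> d) = 1"
  shows
    \<comment> \<open>individually rational\<close>
    "(\<forall>D. \<forall>i<n. payment B M L n i D \<ge> 0)
     \<comment> \<open>truthful\<close>
     \<and> (\<forall>i<n. \<forall>d d'.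
          (\<Sum>Dm\<in>others n i. cond_prob M L n i d Dm * payment B M L n i (Dm(i := d)))
          \<ge> (\<Sum>Dm\<in>others n i. cond_prob M L n i d Dm * payment B M L n i (Dm(i := d'))))
     \<comment> \<open>budget feasible\<close>
     \<and> (\<forall>D. (\<Sum>i<n. payment B M L n i D) \<le> B)
     \<comment> \<open>symmetric\<close>
     \<and> (\<forall>\<pi> D. \<pi> permutes {..<n} \<longrightarrow>
          (\<forall>i<n. payment B M L n i (D \<circ> \<pi>) = payment B M L n (\<pi> i) D))"
proof (intro conjI allI impI)
  fix D i assume "i < n"
  show "payment B M L n i D \<ge> 0"
    using score_bounds[of L M n i D, OF L_nonneg] B_nonneg
    unfolding payment_def by simp
next
  fix i d d' assume "i < n"
  show "(\<Sum>Dm\<in>others n i. cond_prob M L n i d Dm * payment B M L n i (Dm(i := d)))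
          \<ge> (\<Sum>Dm\<in>others n i. cond_prob M L n i d Dm * payment B M L n i (Dm(i := d')))"
    by (rule truthful[OF B_nonneg L_nonneg])
next
  fix D
  show "(\<Sum>i<n. payment B M L n i D) \<le> B"
  proof (cases "n = 0")
    case True then show ?thesis using B_nonneg by simp
  next
    case False
    have "(\<Sum>i<n. payment B M L n i D) \<le> (\<Sum>i<n. B / real n)"
    proof (rule sum_mono)
      fix i
      have "B * brier_score M L n i D \<le> B"
        using score_bounds[of L M n i D, OF L_nonneg] B_nonneg
        by (simp add: mult_left_le)
      then show "payment B M L n i D \<le> B / real n"
        unfolding payment_def by (simp add: divide_right_mono)
    qed
    also have "\<dots> = B" using False by simp
    finally show ?thesis .
  qed
next
  fix \<pi> :: "nat \<Rightarrow> nat" and D :: "nat \<Rightarrow> 'd" and i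
  assume "\<pi> permutes {..<n}" "i < n"
  then show "payment B M L n i (D \<circ> \<pi>) = payment B M L n (\<pi> i) D"
    unfolding payment_def by (simp add: sym_score)
qed

end
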